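(* Let $p$ be a prime and $n\ge 1$. The maximum, over all two-element subsets $\{P,Q\}\subseteq \mathbb Z_p^n$, of the number of distinct reduced Gröbner bases of the ideal $I(\{P,Q\})\subseteq \mathbb Z_p[x_1,\ldots,x_n]$ is $n$.
   Context: $\mathbb Z_p$ denotes the field of integers modulo $p$. For a finite set $S\subseteq \mathbb Z_p^n$, $I(S)$ is the ideal of all polynomials in $\mathbb Z_p[x_1,\ldots,x_n]$ vanishing at every point of $S$. The number of reduced Gröbner bases of an ideal means the number of distinct reduced Gröbner bases obtained as the monomial order ranges over all monomial orders. *)

theory Defs
  imports "HOL-Library.Poly_Mapping" "Berlekamp_Zassenhaus.Finite_Field"
begin

type_synonym monom = "nat \<Rightarrow>\<^sub>0 nat"
type_synonym 'a mpoly = "monom \<Rightarrow>\<^sub>0 'a"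

definition monoms :: "nat \<Rightarrow> monom set" where
  "monoms n = {m. Poly_Mapping.keys m \<subseteq> {..<n}}"

definition polys :: "nat \<Rightarrow> ('a::zero) mpoly set" where
  "polys n = {f. Poly_Mapping.keys f \<subseteq> monoms n}"

definition points :: "nat \<Rightarrow> 'a list set" where
  "points n = {x. length x = n}"

definition eval_mpoly :: "nat \<Rightarrow> ('a::comm_semiring_1) mpoly \<Rightarrow> 'a list \<Rightarrow> 'a" where
  "eval_mpoly n f x = (\<Sum>m\<in>Poly_Mapping.keys f. Poly_Mapping.lookup f m * (\<Prod>i<n. (x ! i) ^ Poly_Mapping.lookup m i))"

definition vanishing_ideal :: "nat \<Rightarrow> ('a::comm_semiring_1) list set \<Rightarrow> 'a mpoly set" where
  "vanishing_ideal n S = {f \<in> polys n. \<forall>x\<in>S. eval_mpoly n f x = 0}"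

definition monomial_order :: "nat \<Rightarrow> (monom \<Rightarrow> monom \<Rightarrow> bool) \<Rightarrow> bool" where
  "monomial_order n ord \<longleftrightarrow>
     (\<forall>a\<in>monoms n. ord a a) \<and>
     (\<forall>a\<in>monoms n. \<forall>b\<in>monoms n. ord a b \<and> ord b a \<longrightarrow> a = b) \<and>
     (\<forall>a\<in>monoms n. \<forall>b\<in>monoms n. \<forall>c\<in>monoms n. ord a b \<and> ord b c \<longrightarrow> ord a c) \<and>
     (\<forall>a\<in>monoms n. \<forall>b\<in>monoms n. ord a b \<or> ord b a) \<and>
     (\<forall>a\<in>monoms n. ord 0 a) \<and>
     (\<forall>a\<in>monoms n. \<forall>b\<in>monoms n. \<forall>c\<in>monoms n. ord a b \<longrightarrow> ord (a + c) (b + c))"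

definition lead_monom :: "(monom \<Rightarrow> monom \<Rightarrow> bool) \<Rightarrow> ('a::zero) mpoly \<Rightarrow> monom" where
  "lead_monom ord f = (THE m. m \<in> Poly_Mapping.keys f \<and> (\<forall>m'\<in>Poly_Mapping.keys f. ord m' m))"

definition lead_coeff_m :: "(monom \<Rightarrow> monom \<Rightarrow> bool) \<Rightarrow> ('a::zero) mpoly \<Rightarrow> 'a" where
  "lead_coeff_m ord f = Poly_Mapping.lookup f (lead_monom ord f)"

definition monom_dvd :: "monom \<Rightarrow> monom \<Rightarrow> bool" where
  "monom_dvd a b \<longleftrightarrow> (\<forall>i. Poly_Mapping.lookup a i \<le> Poly_Mapping.lookup b i)"

definition groebner_basis :: "nat \<Rightarrow> (monom \<Rightarrow> monom \<Rightarrow> bool) \<Rightarrow> ('a::zero) mpoly set \<Rightarrow> 'a mpoly set \<Rightarrow> bool" where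
  "groebner_basis n ord I G \<longleftrightarrow> finite G \<and> G \<subseteq> I \<and> 0 \<notin> G \<and>
     (\<forall>f\<in>I. f \<noteq> 0 \<longrightarrow> (\<exists>g\<in>G. monom_dvd (lead_monom ord g) (lead_monom ord f)))"

definition reduced_groebner_basis :: "nat \<Rightarrow> (monom \<Rightarrow> monom \<Rightarrow> bool) \<Rightarrow> ('a::{zero,one}) mpoly set \<Rightarrow> 'a mpoly set \<Rightarrow> bool" where
  "reduced_groebner_basis n ord I G \<longleftrightarrow> groebner_basis n ord I G \<and>
     (\<forall>g\<in>G. lead_coeff_m ord g = 1) \<and>
     (\<forall>g\<in>G. \<forall>h\<in>G. h \<noteq> g \<longrightarrow> (\<forall>m\<in>Poly_Mapping.keys g. \<not> monom_dvd (lead_monom ord h) m))"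

definition reduced_GBs :: "nat \<Rightarrow> ('a::{zero,one}) mpoly set \<Rightarrow> 'a mpoly set set" where
  "reduced_GBs n I = {G. \<exists>ord. monomial_order n ord \<and> reduced_groebner_basis n ord I G}"

end

theory Submission
  imports Defs "HOL-Library.List_Lexorder"
begin

definition ee :: "nat \<Rightarrow> monom" where "ee j = Poly_Mapping.single j 1"
definition mon :: "nat \<Rightarrow> monom \<Rightarrow> 'a::comm_semiring_1 list \<Rightarrow> 'a" where
  "mon n m x = (\<Prod>i<n. (x ! i) ^ Poly_Mapping.lookup m i)"

lemma lookup_ee: "Poly_Mapping.lookup (ee j) k = (if k = j then 1 else 0)"
  by (simp add: ee_def lookup_single when_def)

lemma eval_superset:
  assumes "finite S" "Poly_Mapping.keys f \<subseteq> S"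
  shows "eval_mpoly n f x = (\<Sum>m\<in>S. Poly_Mapping.lookup f m * mon n m x)"
  unfolding eval_mpoly_def mon_def
  by (rule sum.mono_neutral_left) (use assms in \<open>auto simp: in_keys_iff\<close>)

lemma mon_0[simp]: "mon n 0 x = 1" by (simp add: mon_def)

lemma mon_ee: "i < n \<Longrightarrow> mon n (ee i) x = x ! i"
proof -
  assume "i < n"
  have "mon n (ee i) x = (\<Prod>j<n. if j = i then x ! j else 1)"
    unfolding mon_def by (rule prod.cong) (auto simp: lookup_ee)
  also have "\<dots> = x ! i" using \<open>i<n\<close> by (simp add: prod.delta)
  finally show ?thesis .
qed

lemma ee_neq0[simp]: "ee j \<noteq> 0"
  by (metis lookup_ee lookup_zero one_neq_zero)

lemma ee_inj: "ee j = ee k \<longleftrightarrow> j = k"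
  by (metis lookup_ee one_neq_zero)

lemma ee_monoms: "j < n \<Longrightarrow> ee j \<in> monoms n"
  by (simp add: monoms_def ee_def)

lemma zero_monoms[simp]: "0 \<in> monoms n" by (simp add: monoms_def)

lemma add_monoms: "a \<in> monoms n \<Longrightarrow> b \<in> monoms n \<Longrightarrow> a + b \<in> monoms n"
  unfolding monoms_def using keys_add by fastforce

lemma monoms_lookup: "a \<in> monoms n \<Longrightarrow> j \<ge> n \<Longrightarrow> Poly_Mapping.lookup a j = 0"
  unfolding monoms_def by (auto simp: in_keys_iff)

lemma monoms_iff: "a \<in> monoms n \<longleftrightarrow> (\<forall>j\<ge>n. Poly_Mapping.lookup a j = 0)"
  unfolding monoms_def by (auto simp: in_keys_iff) (metis leI less_irrefl)

lemma minus_monoms: "a \<in> monoms n \<Longrightarrow> a - b \<in> monoms n"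
  by (simp add: monoms_iff lookup_minus)

lemma keys_polys: "f \<in> polys n \<Longrightarrow> k \<in> Poly_Mapping.keys f \<Longrightarrow> k \<in> monoms n"
  unfolding polys_def by auto

lemma monom_dvd_trans: "monom_dvd a b \<Longrightarrow> monom_dvd b c \<Longrightarrow> monom_dvd a c"
  unfolding monom_dvd_def using le_trans by blast

lemma monom_dvd_antisym: "monom_dvd a b \<Longrightarrow> monom_dvd b a \<Longrightarrow> a = b"
  unfolding monom_dvd_def by (rule poly_mapping_eqI) (meson antisym)

lemma monom_dvd_refl[simp]: "monom_dvd a a" by (simp add: monom_dvd_def)

lemma monom_dvd_0: "monom_dvd a 0 \<Longrightarrow> a = 0"
  unfolding monom_dvd_def by (rule poly_mapping_eqI) simp

lemma monom_dvd_ee: "monom_dvd a (ee i) \<Longrightarrow> a = 0 \<or> a = ee i"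
proof -
  assume d: "monom_dvd a (ee i)"
  hence le: "\<And>k. Poly_Mapping.lookup a k \<le> (if k = i then 1 else 0)"
    unfolding monom_dvd_def lookup_ee by metis
  show ?thesis
  proof (cases "Poly_Mapping.lookup a i = 0")
    case True
    hence "a = 0" using le by (intro poly_mapping_eqI) (metis le_zero_eq lookup_zero)
    thus ?thesis ..
  next
    case False
    hence "a = ee i" using le
      by (intro poly_mapping_eqI) (metis le_zero_eq lookup_ee le_antisym One_nat_def Suc_leI not_gr_zero)
    thus ?thesis ..
  qed
qed

lemma ee_dvd: "monom_dvd (ee j) m \<longleftrightarrow> Poly_Mapping.lookup m j \<ge> 1"
  unfolding monom_dvd_def lookup_ee by auto

lemma ee2_dvd: "monom_dvd (ee j + ee j) m \<longleftrightarrow> Poly_Mapping.lookup m j \<ge> 2"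
  unfolding monom_dvd_def lookup_add lookup_ee by auto

context
  fixes n :: nat and ord :: "monom \<Rightarrow> monom \<Rightarrow> bool"
  assumes mo: "monomial_order n ord"
begin

lemma mo_refl: "a \<in> monoms n \<Longrightarrow> ord a a" using mo unfolding monomial_order_def by blast
lemma mo_antisym: "a \<in> monoms n \<Longrightarrow> b \<in> monoms n \<Longrightarrow> ord a b \<Longrightarrow> ord b a \<Longrightarrow> a = b"
  using mo unfolding monomial_order_def by blast
lemma mo_trans: "a \<in> monoms n \<Longrightarrow> b \<in> monoms n \<Longrightarrow> c \<in> monoms n \<Longrightarrow> ord a b \<Longrightarrow> ord b c \<Longrightarrow> ord a c"
  using mo unfolding monomial_order_def by blast
lemma mo_total: "a \<in> monoms n \<Longrightarrow> b \<in> monoms n \<Longrightarrow> ord a b \<or> ord b a"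
  using mo unfolding monomial_order_def by blast
lemma mo_zero: "a \<in> monoms n \<Longrightarrow> ord 0 a"
  using mo unfolding monomial_order_def by blast
lemma mo_add: "a \<in> monoms n \<Longrightarrow> b \<in> monoms n \<Longrightarrow> c \<in> monoms n \<Longrightarrow> ord a b \<Longrightarrow> ord (a + c) (b + c)"
  using mo unfolding monomial_order_def by blast

lemma mo_dvd: assumes "a \<in> monoms n" "b \<in> monoms n" "monom_dvd a b" shows "ord a b"
proof -
  have eq: "b = (b - a) + a"
    using assms(3) unfolding monom_dvd_def by (intro poly_mapping_eqI) (simp add: lookup_add lookup_minus)
  have "ord (0 + a) ((b - a) + a)"
    by (rule mo_add) (use assms minus_monoms mo_zero in auto)
  thus ?thesis using eq by simp
qed

lemma exists_max: "finite S \<Longrightarrow> S \<noteq> {} \<Longrightarrow> S \<subseteq> monoms n \<Longrightarrow> \<exists>m\<in>S. \<forall>m'\<in>S. ord m' m"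
proof (induction S rule: finite_ne_induct)
  case (singleton x) thus ?case using mo_refl by auto
next
  case (insert x F)
  then obtain m where m: "m \<in> F" "\<forall>m'\<in>F. ord m' m" by auto
  show ?case
  proof (cases "ord x m")
    case True thus ?thesis using m by auto
  next
    case False
    hence mx: "ord m x" using mo_total insert.prems m by auto
    have "\<forall>m'\<in>insert x F. ord m' x"
    proof
      fix m' assume "m' \<in> insert x F"
      thus "ord m' x"
      proof
        assume "m' = x" thus ?thesis using mo_refl insert.prems by auto
      next
        assume "m' \<in> F" thus ?thesis using mo_trans[of m' m x] m mx insert.prems by auto
      qed
    qed
    thus ?thesis by auto
  qed
qed

lemma exists_min: "finite S \<Longrightarrow> S \<noteq> {} \<Longrightarrow> S \<subseteq> monoms n \<Longrightarrow> \<exists>m\<in>S. \<forall>m'\<in>S. ord m m'"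
proof (induction S rule: finite_ne_induct)
  case (singleton x) thus ?case using mo_refl by auto
next
  case (insert x F)
  then obtain m where m: "m \<in> F" "\<forall>m'\<in>F. ord m m'" by auto
  show ?case
  proof (cases "ord m x")
    case True thus ?thesis using m by auto
  next
    case False
    hence mx: "ord x m" using mo_total insert.prems m by auto
    have "\<forall>m'\<in>insert x F. ord x m'"
    proof
      fix m' assume "m' \<in> insert x F"
      thus "ord x m'"
      proof
        assume "m' = x" thus ?thesis using mo_refl insert.prems by auto
      next
        assume "m' \<in> F" thus ?thesis using mo_trans[of x m m'] m mx insert.prems by auto
      qed
    qed
    thus ?thesis by auto
  qed
qed

lemma lead_eq:
  assumes "f \<in> polys n" "m \<in> Poly_Mapping.keys f" "\<forall>k\<in>Poly_Mapping.keys f. ord k m"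
  shows "lead_monom ord f = m"
  unfolding lead_monom_def
proof (rule the_equality)
  show "m \<in> Poly_Mapping.keys f \<and> (\<forall>m'\<in>Poly_Mapping.keys f. ord m' m)" using assms by auto
next
  fix m' assume "m' \<in> Poly_Mapping.keys f \<and> (\<forall>m''\<in>Poly_Mapping.keys f. ord m'' m')"
  thus "m' = m" using assms keys_polys mo_antisym by blast
qed

lemma lead_props:
  assumes "f \<in> polys n" "f \<noteq> 0"
  shows "lead_monom ord f \<in> Poly_Mapping.keys f" "\<forall>k\<in>Poly_Mapping.keys f. ord k (lead_monom ord f)"
proof -
  obtain m where "m \<in> Poly_Mapping.keys f" "\<forall>k\<in>Poly_Mapping.keys f. ord k m"
    using exists_max[of "Poly_Mapping.keys f"] assms keys_polys by auto
  with lead_eq[OF assms(1) this] show "lead_monom ord f \<in> Poly_Mapping.keys f"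
    "\<forall>k\<in>Poly_Mapping.keys f. ord k (lead_monom ord f)" by auto
qed

end

definition dcoef :: "nat \<Rightarrow> 'a::field list \<Rightarrow> 'a list \<Rightarrow> nat \<Rightarrow> monom \<Rightarrow> 'a" where
  "dcoef n P Q i m = (mon n m P - mon n m Q) / (P ! i - Q ! i)"
definition ccoef :: "nat \<Rightarrow> 'a::field list \<Rightarrow> 'a list \<Rightarrow> nat \<Rightarrow> monom \<Rightarrow> 'a" where
  "ccoef n P Q i m = mon n m P - dcoef n P Q i m * P ! i"
definition hcan :: "nat \<Rightarrow> 'a::field list \<Rightarrow> 'a list \<Rightarrow> nat \<Rightarrow> monom \<Rightarrow> 'a mpoly" where
  "hcan n P Q i m = Poly_Mapping.single m 1 - Poly_Mapping.single 0 (ccoef n P Q i m)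
      - Poly_Mapping.single (ee i) (dcoef n P Q i m)"
definition Uset :: "nat \<Rightarrow> nat \<Rightarrow> monom set" where
  "Uset n i = monoms n - {0, ee i}"
definition Mins :: "nat \<Rightarrow> nat \<Rightarrow> monom set" where
  "Mins n i = {m \<in> Uset n i. \<forall>m'\<in>Uset n i. monom_dvd m' m \<longrightarrow> m' = m}"
definition GC :: "nat \<Rightarrow> 'a::field list \<Rightarrow> 'a list \<Rightarrow> nat \<Rightarrow> 'a mpoly set" where
  "GC n P Q i = hcan n P Q i ` Mins n i"

lemma lookup_hcan:
  assumes "m \<noteq> 0" "m \<noteq> ee i"
  shows "Poly_Mapping.lookup (hcan n P Q i m) k =
    (if k = m then 1 else if k = 0 then - ccoef n P Q i m else if k = ee i then - dcoef n P Q i m else 0)"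
  using assms ee_neq0[of i] unfolding hcan_def
  by (auto simp: lookup_minus lookup_single when_def)

lemma keys_hcan:
  assumes "m \<noteq> 0" "m \<noteq> ee i"
  shows "Poly_Mapping.keys (hcan n P Q i m) \<subseteq> {m, 0, ee i}" "m \<in> Poly_Mapping.keys (hcan n P Q i m)"
  by (auto simp: in_keys_iff lookup_hcan[OF assms] split: if_splits)

lemma hcan_neq0: "m \<noteq> 0 \<Longrightarrow> m \<noteq> ee i \<Longrightarrow> hcan n P Q i m \<noteq> 0"
  using keys_hcan(2)[of m i n P Q] by auto

lemma Mins_sub_Uset: "Mins n i \<subseteq> Uset n i" unfolding Mins_def by auto

lemma mon_eqI:
  assumes "\<And>j. j < n \<Longrightarrow> Poly_Mapping.lookup m j > 0 \<Longrightarrow> P ! j = Q ! j"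
  shows "mon n m P = mon n m Q"
  unfolding mon_def by (rule prod.cong) (use assms in \<open>auto\<close>, metis assms power_0 not_gr0)

locale twopt =
  fixes n :: nat and P Q :: "'a::field list" and i :: nat
  assumes lenP: "length P = n" and lenQ: "length Q = n" and i_lt: "i < n" and Pi: "P ! i \<noteq> Q ! i"
begin

abbreviation "II \<equiv> vanishing_ideal n {P, Q}"

lemma hcan_I:
  assumes "m \<in> Uset n i"
  shows "hcan n P Q i m \<in> II"
proof -
  have m: "m \<in> monoms n" "m \<noteq> 0" "m \<noteq> ee i" using assms unfolding Uset_def by auto
  have poly: "hcan n P Q i m \<in> polys n"
    using keys_hcan(1)[OF m(2,3), of n P Q] m(1) ee_monoms[OF i_lt] zero_monoms unfolding polys_def by blast
  have ev: "eval_mpoly n (hcan n P Q i m) x = mon n m x - ccoef n P Q i m - dcoef n P Q i m * x ! i" for x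
  proof -
    have "eval_mpoly n (hcan n P Q i m) x =
       (\<Sum>k\<in>{m, 0, ee i}. Poly_Mapping.lookup (hcan n P Q i m) k * mon n k x)"
      by (rule eval_superset) (use keys_hcan(1)[OF m(2,3)] in auto)
    also have "\<dots> = mon n m x - ccoef n P Q i m - dcoef n P Q i m * x ! i"
      using m(2,3) ee_neq0[of i] by (simp add: lookup_hcan mon_ee[OF i_lt])
    finally show ?thesis .
  qed
  have d: "dcoef n P Q i m * (P ! i - Q ! i) = mon n m P - mon n m Q"
    unfolding dcoef_def using Pi by simp
  have "eval_mpoly n (hcan n P Q i m) P = 0" unfolding ev ccoef_def by simp
  moreover have "eval_mpoly n (hcan n P Q i m) Q = 0" unfolding ev ccoef_def using d
    by (simp add: algebra_simps)
  ultimately show ?thesis using poly unfolding vanishing_ideal_def by auto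
qed

end

lemma lookup_ee2: "Poly_Mapping.lookup (ee i + ee i) k = (if k = i then 2 else 0)"
  by (simp add: lookup_add lookup_ee)

lemma ee2_neq: "ee i + ee i \<noteq> 0" "ee i + ee i \<noteq> ee i" "ee i + ee i \<noteq> ee j"
  by (metis lookup_ee2 lookup_ee lookup_zero zero_neq_numeral numeral_One numeral_eq_iff semiring_norm(85)
      zero_neq_one)+

lemma ee_in_Uset: "j < n \<Longrightarrow> j \<noteq> i \<Longrightarrow> ee j \<in> Uset n i"
  unfolding Uset_def using ee_monoms ee_inj by auto

lemma ee2_in_Uset: "i < n \<Longrightarrow> ee i + ee i \<in> Uset n i"
  unfolding Uset_def using ee_monoms add_monoms ee2_neq by auto

lemma ee_in_Mins: "j < n \<Longrightarrow> j \<noteq> i \<Longrightarrow> ee j \<in> Mins n i"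
  unfolding Mins_def using ee_in_Uset monom_dvd_ee unfolding Uset_def by blast

lemma ee2_in_Mins: assumes "i < n" shows "ee i + ee i \<in> Mins n i"
proof -
  have "m' = ee i + ee i" if "m' \<in> Uset n i" "monom_dvd m' (ee i + ee i)" for m'
  proof -
    have le: "Poly_Mapping.lookup m' k \<le> (if k = i then 2 else 0)" for k
      using that(2) unfolding monom_dvd_def lookup_ee2 by metis
    have z: "Poly_Mapping.lookup m' k = 0" if "k \<noteq> i" for k using le[of k] that by simp
    have "Poly_Mapping.lookup m' i \<noteq> 0"
    proof
      assume "Poly_Mapping.lookup m' i = 0"
      hence "m' = 0" using z by (intro poly_mapping_eqI) (metis lookup_zero)
      thus False using that(1) unfolding Uset_def by auto
    qed
    moreover have "Poly_Mapping.lookup m' i \<noteq> 1"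
    proof
      assume "Poly_Mapping.lookup m' i = 1"
      hence "m' = ee i" using z by (intro poly_mapping_eqI) (metis lookup_ee)
      thus False using that(1) unfolding Uset_def by auto
    qed
    ultimately have "Poly_Mapping.lookup m' i = 2" using le[of i] by simp
    thus ?thesis using z by (intro poly_mapping_eqI) (simp add: lookup_ee2)
  qed
  thus ?thesis unfolding Mins_def using ee2_in_Uset[OF assms] by auto
qed

lemma Uset_dvd_gen:
  assumes "m \<in> Uset n i"
  shows "(\<exists>j<n. j \<noteq> i \<and> monom_dvd (ee j) m) \<or> monom_dvd (ee i + ee i) m"
proof (rule ccontr)
  assume "\<not> ?thesis"
  hence A: "\<And>j. j < n \<Longrightarrow> j \<noteq> i \<Longrightarrow> Poly_Mapping.lookup m j = 0" and B: "Poly_Mapping.lookup m i < 2"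
    unfolding ee_dvd ee2_dvd by auto
  have mon: "m \<in> monoms n" "m \<noteq> 0" "m \<noteq> ee i" using assms unfolding Uset_def by auto
  have z: "Poly_Mapping.lookup m k = 0" if "k \<noteq> i" for k
    using A monoms_lookup[OF mon(1)] that by (cases "k < n") auto
  show False
  proof (cases "Poly_Mapping.lookup m i = 0")
    case True
    hence "m = 0" using z by (intro poly_mapping_eqI) (metis lookup_zero)
    thus False using mon by auto
  next
    case False
    hence "Poly_Mapping.lookup m i = 1" using B by simp
    hence "m = ee i" using z by (intro poly_mapping_eqI) (metis lookup_ee)
    thus False using mon by auto
  qed
qed

lemma Uset_has_Mins: assumes "i < n" "m \<in> Uset n i" shows "\<exists>m'\<in>Mins n i. monom_dvd m' m"
  using Uset_dvd_gen[OF assms(2)] ee_in_Mins ee2_in_Mins[OF assms(1)] by blast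

lemma Mins_sub: assumes "i < n" shows "Mins n i \<subseteq> ee ` {..<n} \<union> {ee i + ee i}"
proof
  fix m assume m: "m \<in> Mins n i"
  hence mU: "m \<in> Uset n i" and mm: "\<forall>m'\<in>Uset n i. monom_dvd m' m \<longrightarrow> m' = m" unfolding Mins_def by auto
  from Uset_dvd_gen[OF mU] show "m \<in> ee ` {..<n} \<union> {ee i + ee i}"
  proof
    assume "\<exists>j<n. j \<noteq> i \<and> monom_dvd (ee j) m"
    then obtain j where "j < n" "j \<noteq> i" "monom_dvd (ee j) m" by auto
    hence "ee j = m" using mm ee_in_Uset by blast
    thus ?thesis using \<open>j<n\<close> by auto
  next
    assume "monom_dvd (ee i + ee i) m"
    hence "ee i + ee i = m" using mm ee2_in_Uset[OF assms] by blast
    thus ?thesis by auto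
  qed
qed

lemma finite_Mins: "i < n \<Longrightarrow> finite (Mins n i)"
  using Mins_sub finite_subset by blast

locale twopt_ord = twopt n P Q i for n :: nat and P Q :: "'a::field list" and i :: nat +
  fixes ord :: "monom \<Rightarrow> monom \<Rightarrow> bool"
  assumes mo: "monomial_order n ord"
    and hmin: "\<And>j. j < n \<Longrightarrow> P ! j \<noteq> Q ! j \<Longrightarrow> ord (ee i) (ee j)"
begin

lemma below_eei:
  assumes k: "k \<in> monoms n" "ord k (ee i)" "k \<noteq> ee i" and j: "j < n" "Poly_Mapping.lookup k j > 0"
  shows "P ! j = Q ! j"
proof (rule ccontr)
  assume "P ! j \<noteq> Q ! j"
  hence "ord (ee i) (ee j)" using hmin j by auto
  moreover have "ord (ee j) k" using mo_dvd[OF mo ee_monoms[OF j(1)] k(1)] j(2) ee_dvd by fastforce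
  ultimately have "ord (ee i) k" using mo_trans[OF mo ee_monoms[OF i_lt] ee_monoms[OF j(1)] k(1)] by blast
  thus False using mo_antisym[OF mo k(1) ee_monoms[OF i_lt]] k by blast
qed

lemma lead_hcan:
  assumes "m \<in> Uset n i"
  shows "lead_monom ord (hcan n P Q i m) = m"
proof -
  have m: "m \<in> monoms n" "m \<noteq> 0" "m \<noteq> ee i" using assms unfolding Uset_def by auto
  have poly: "hcan n P Q i m \<in> polys n" using hcan_I[OF assms] unfolding vanishing_ideal_def by auto
  show ?thesis
  proof (rule lead_eq[OF mo poly keys_hcan(2)[OF m(2,3)]], rule ballI)
    fix k assume k: "k \<in> Poly_Mapping.keys (hcan n P Q i m)"
    hence "k = m \<or> k = 0 \<or> k = ee i" using keys_hcan(1)[OF m(2,3)] by blast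
    thus "ord k m"
    proof (elim disjE)
      assume "k = m" thus ?thesis using mo_refl[OF mo m(1)] by simp
    next
      assume "k = 0" thus ?thesis using mo_zero[OF mo m(1)] by simp
    next
      assume ke: "k = ee i"
      have "Poly_Mapping.lookup (hcan n P Q i m) (ee i) = - dcoef n P Q i m"
        using lookup_hcan[OF m(2,3), of n P Q "ee i"] m ee_neq0[of i] by auto
      hence "dcoef n P Q i m \<noteq> 0" using k ke by (auto simp: in_keys_iff)
      hence "mon n m P \<noteq> mon n m Q" unfolding dcoef_def by auto
      then obtain j where j: "j < n" "Poly_Mapping.lookup m j > 0" "P ! j \<noteq> Q ! j"
        using mon_eqI by blast
      have "ord (ee j) m" using mo_dvd[OF mo ee_monoms[OF j(1)] m(1)] j(2) ee_dvd by fastforce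
      thus ?thesis using hmin[OF j(1,3)] ke mo_trans[OF mo ee_monoms[OF i_lt] ee_monoms[OF j(1)] m(1)] by blast
    qed
  qed
qed

lemma lead_U:
  assumes f: "f \<in> II" "f \<noteq> 0"
  shows "lead_monom ord f \<in> Uset n i"
proof -
  have poly: "f \<in> polys n" and ev: "eval_mpoly n f P = 0" "eval_mpoly n f Q = 0"
    using f unfolding vanishing_ideal_def by auto
  define L where "L = lead_monom ord f"
  have Lk: "L \<in> Poly_Mapping.keys f" and Lmax: "\<forall>k\<in>Poly_Mapping.keys f. ord k L"
    using lead_props[OF mo poly f(2)] unfolding L_def by auto
  have Lm: "L \<in> monoms n" using keys_polys[OF poly Lk] .
  have "L \<noteq> 0"
  proof
    assume L0: "L = 0"
    have "Poly_Mapping.keys f = {0}"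
    proof -
      have "k = 0" if "k \<in> Poly_Mapping.keys f" for k
        using Lmax that L0 mo_zero[OF mo] mo_antisym[OF mo] keys_polys[OF poly] by fastforce
      thus ?thesis using Lk L0 by blast
    qed
    hence "eval_mpoly n f P = Poly_Mapping.lookup f 0" unfolding eval_mpoly_def by simp
    thus False using ev Lk L0 by (simp add: in_keys_iff)
  qed
  moreover have "L \<noteq> ee i"
  proof
    assume Le: "L = ee i"
    have split: "eval_mpoly n f x = Poly_Mapping.lookup f L * x ! i
        + (\<Sum>k\<in>Poly_Mapping.keys f - {L}. Poly_Mapping.lookup f k * mon n k x)" for x
      unfolding eval_mpoly_def mon_def[symmetric] using Lk
      by (subst sum.remove[of _ L]) (auto simp: Le mon_ee[OF i_lt])
    have "(\<Sum>k\<in>Poly_Mapping.keys f - {L}. Poly_Mapping.lookup f k * mon n k P)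
        = (\<Sum>k\<in>Poly_Mapping.keys f - {L}. Poly_Mapping.lookup f k * mon n k Q)"
    proof (rule sum.cong[OF refl])
      fix k assume k: "k \<in> Poly_Mapping.keys f - {L}"
      have "mon n k P = mon n k Q"
        by (rule mon_eqI, rule below_eei) (use k Lmax keys_polys[OF poly] Le in auto)
      thus "Poly_Mapping.lookup f k * mon n k P = Poly_Mapping.lookup f k * mon n k Q" by simp
    qed
    hence "eval_mpoly n f P - eval_mpoly n f Q = Poly_Mapping.lookup f L * (P ! i - Q ! i)"
      using split[of P] split[of Q] by (simp add: algebra_simps)
    hence "Poly_Mapping.lookup f L * (P ! i - Q ! i) = 0" using ev by simp
    thus False using Pi Lk by (simp add: in_keys_iff)
  qed
  ultimately show ?thesis unfolding Uset_def L_def[symmetric] using Lm by auto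
qed

end

context twopt_ord begin

lemma Mins_U: "m \<in> Mins n i \<Longrightarrow> m \<in> Uset n i" using Mins_sub_Uset by blast

lemma Uset_facts: "m \<in> Uset n i \<Longrightarrow> m \<in> monoms n \<and> m \<noteq> 0 \<and> m \<noteq> ee i"
  unfolding Uset_def by auto

lemma GC_reduced: "reduced_groebner_basis n ord II (GC n P Q i)"
  unfolding reduced_groebner_basis_def groebner_basis_def
proof (intro conjI ballI impI)
  show "finite (GC n P Q i)" unfolding GC_def using finite_Mins[OF i_lt] by simp
  show "GC n P Q i \<subseteq> II" unfolding GC_def using hcan_I Mins_U by blast
  show "0 \<notin> GC n P Q i" unfolding GC_def using hcan_neq0 Mins_U Uset_facts by fastforce
next
  fix f assume f: "f \<in> II" "f \<noteq> 0"
  obtain m' where m': "m' \<in> Mins n i" "monom_dvd m' (lead_monom ord f)"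
    using Uset_has_Mins[OF i_lt lead_U[OF f]] by blast
  thus "\<exists>g\<in>GC n P Q i. monom_dvd (lead_monom ord g) (lead_monom ord f)"
    unfolding GC_def using lead_hcan[OF Mins_U[OF m'(1)]] by force
next
  fix g assume "g \<in> GC n P Q i"
  then obtain m where m: "m \<in> Mins n i" "g = hcan n P Q i m" unfolding GC_def by auto
  have u: "m \<noteq> 0" "m \<noteq> ee i" using Uset_facts[OF Mins_U[OF m(1)]] by auto
  show "lead_coeff_m ord g = 1" unfolding lead_coeff_m_def m(2) lead_hcan[OF Mins_U[OF m(1)]]
    by (simp add: lookup_hcan[OF u])
next
  fix g h k assume "g \<in> GC n P Q i" "h \<in> GC n P Q i" "h \<noteq> g" and kk: "k \<in> Poly_Mapping.keys g"
  then obtain m m' where m: "m \<in> Mins n i" "g = hcan n P Q i m" and m': "m' \<in> Mins n i" "h = hcan n P Q i m'"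
    unfolding GC_def by auto
  have mm: "m' \<noteq> m" using \<open>h \<noteq> g\<close> m m' by auto
  have u: "m \<noteq> 0" "m \<noteq> ee i" using Uset_facts[OF Mins_U[OF m(1)]] by auto
  have u': "m' \<noteq> 0" "m' \<noteq> ee i" using Uset_facts[OF Mins_U[OF m'(1)]] by auto
  have lh: "lead_monom ord h = m'" using lead_hcan[OF Mins_U[OF m'(1)]] m'(2) by simp
  have "k = m \<or> k = 0 \<or> k = ee i" using keys_hcan(1)[OF u] m(2) kk by blast
  thus "\<not> monom_dvd (lead_monom ord h) k"
  proof (elim disjE)
    assume "k = m" thus ?thesis using m(1) Mins_U[OF m'(1)] mm lh unfolding Mins_def by auto
  next
    assume "k = 0" thus ?thesis using monom_dvd_0 u' lh by auto
  next
    assume "k = ee i" thus ?thesis using monom_dvd_ee u' lh by auto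
  qed
qed

lemma reduced_unique:
  assumes G: "reduced_groebner_basis n ord II G"
  shows "G = GC n P Q i"
proof -
  have gb: "finite G" "G \<subseteq> II" "0 \<notin> G"
    and gbd: "\<And>f. f \<in> II \<Longrightarrow> f \<noteq> 0 \<Longrightarrow> \<exists>g\<in>G. monom_dvd (lead_monom ord g) (lead_monom ord f)"
    and monic: "\<And>g. g \<in> G \<Longrightarrow> lead_coeff_m ord g = 1"
    and red: "\<And>g h k. g \<in> G \<Longrightarrow> h \<in> G \<Longrightarrow> h \<noteq> g \<Longrightarrow> k \<in> Poly_Mapping.keys g \<Longrightarrow>
       \<not> monom_dvd (lead_monom ord h) k"
    using G unfolding reduced_groebner_basis_def groebner_basis_def by blast+
  have gpoly: "g \<in> polys n" if "g \<in> G" for g using gb that unfolding vanishing_ideal_def by auto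
  have gnz: "g \<noteq> 0" if "g \<in> G" for g using gb that by auto
  have gI: "g \<in> II" if "g \<in> G" for g using gb that by auto
  have LU: "lead_monom ord g \<in> Uset n i" if "g \<in> G" for g using lead_U[OF gI[OF that] gnz[OF that]] .
  have cover: "\<exists>h\<in>G. monom_dvd (lead_monom ord h) k" if "k \<in> Uset n i" for k
    using gbd[OF hcan_I[OF that] hcan_neq0] lead_hcan[OF that] Uset_facts[OF that] by auto
  have tail: "k = lead_monom ord g \<or> k = 0 \<or> k = ee i" if g: "g \<in> G" and k: "k \<in> Poly_Mapping.keys g" for g k
  proof (rule ccontr)
    assume nk: "\<not> ?thesis"
    have km: "k \<in> monoms n" using keys_polys[OF gpoly[OF g] k] .
    hence "k \<in> Uset n i" using nk unfolding Uset_def by auto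
    then obtain h where h: "h \<in> G" "monom_dvd (lead_monom ord h) k" using cover by blast
    show False
    proof (cases "h = g")
      case False thus False using red[OF g h(1) False k] h(2) by blast
    next
      case True
      have Lm: "lead_monom ord g \<in> monoms n" using LU[OF g] Uset_facts by blast
      have "ord (lead_monom ord g) k" using mo_dvd[OF mo Lm km] h(2) True by simp
      moreover have "ord k (lead_monom ord g)" using lead_props(2)[OF mo gpoly[OF g] gnz[OF g]] k by blast
      ultimately show False using mo_antisym[OF mo Lm km] nk by auto
    qed
  qed
  have gcan: "g = hcan n P Q i (lead_monom ord g)" if g: "g \<in> G" for g
  proof -
    define m where "m = lead_monom ord g"
    have u: "m \<noteq> 0" "m \<noteq> ee i" using Uset_facts[OF LU[OF g]] unfolding m_def by auto
    have keys: "Poly_Mapping.keys g \<subseteq> {m, 0, ee i}" using tail[OF g] unfolding m_def by blast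
    have c1: "Poly_Mapping.lookup g m = 1" using monic[OF g] unfolding lead_coeff_m_def m_def .
    define \<alpha> where "\<alpha> = Poly_Mapping.lookup g 0"
    define \<beta> where "\<beta> = Poly_Mapping.lookup g (ee i)"
    have ev: "eval_mpoly n g x = mon n m x + \<alpha> + \<beta> * x ! i" for x
    proof -
      have "eval_mpoly n g x = (\<Sum>k\<in>{m, 0, ee i}. Poly_Mapping.lookup g k * mon n k x)"
        by (rule eval_superset) (use keys in auto)
      thus ?thesis using u ee_neq0[of i] c1 by (simp add: \<alpha>_def \<beta>_def mon_ee[OF i_lt])
    qed
    have eP: "mon n m P + \<alpha> + \<beta> * P ! i = 0" and eQ: "mon n m Q + \<alpha> + \<beta> * Q ! i = 0"
      using gI[OF g] ev unfolding vanishing_ideal_def by auto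
    have "\<beta> * (P ! i - Q ! i) = - (mon n m P - mon n m Q)"
      using eP eQ by (simp add: algebra_simps) (metis add_diff_cancel_left')
    hence b: "\<beta> = - dcoef n P Q i m" unfolding dcoef_def using Pi
      by (simp add: field_simps)
    have a: "\<alpha> = - ccoef n P Q i m" unfolding ccoef_def using eP b
      by (simp add: algebra_simps)
    show ?thesis unfolding m_def[symmetric]
    proof (rule poly_mapping_eqI)
      fix k
      show "Poly_Mapping.lookup g k = Poly_Mapping.lookup (hcan n P Q i m) k"
        using lookup_hcan[OF u, of n P Q k] keys c1 a b \<alpha>_def \<beta>_def
        by (auto simp: in_keys_iff)
    qed
  qed
  have lead_eq_Mins: "lead_monom ord ` G = Mins n i"
  proof
    show "lead_monom ord ` G \<subseteq> Mins n i"
    proof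
      fix m assume "m \<in> lead_monom ord ` G"
      then obtain g where g: "g \<in> G" "m = lead_monom ord g" by auto
      have "m' = m" if m': "m' \<in> Uset n i" "monom_dvd m' m" for m'
      proof -
        obtain h where h: "h \<in> G" "monom_dvd (lead_monom ord h) m'" using cover[OF m'(1)] by blast
        have hm: "monom_dvd (lead_monom ord h) m" using monom_dvd_trans h(2) m'(2) by blast
        have mk: "m \<in> Poly_Mapping.keys g" using lead_props(1)[OF mo gpoly[OF g(1)] gnz[OF g(1)]] g(2) by simp
        have "h = g" using red[OF g(1) h(1) _ mk] hm by blast
        thus ?thesis using h(2) m'(2) g(2) monom_dvd_antisym by blast
      qed
      thus "m \<in> Mins n i" unfolding Mins_def using LU g by auto
    qed
  next
    show "Mins n i \<subseteq> lead_monom ord ` G"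
    proof
      fix m assume m: "m \<in> Mins n i"
      obtain h where h: "h \<in> G" "monom_dvd (lead_monom ord h) m" using cover[OF Mins_U[OF m]] by blast
      have "lead_monom ord h = m" using m LU[OF h(1)] h(2) unfolding Mins_def by blast
      thus "m \<in> lead_monom ord ` G" using h(1) by force
    qed
  qed
  have "G = (\<lambda>g. hcan n P Q i (lead_monom ord g)) ` G" using gcan by force
  also have "\<dots> = hcan n P Q i ` (lead_monom ord ` G)" by (simp add: image_image)
  finally show ?thesis unfolding GC_def lead_eq_Mins .
qed

end

definition wt :: "nat \<Rightarrow> nat \<Rightarrow> monom \<Rightarrow> nat" where
  "wt n i a = (\<Sum>j<n. (if j = i then 1 else 2) * Poly_Mapping.lookup a j)"
definition vec :: "nat \<Rightarrow> monom \<Rightarrow> nat list" where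
  "vec n a = map (Poly_Mapping.lookup a) [0..<n]"
definition lexo :: "nat \<Rightarrow> nat \<Rightarrow> monom \<Rightarrow> monom \<Rightarrow> bool" where
  "lexo n i a b \<longleftrightarrow> wt n i a < wt n i b \<or> (wt n i a = wt n i b \<and> vec n a \<le> vec n b)"

lemma list_add_mono:
  fixes f g h :: "nat \<Rightarrow> nat"
  shows "map f js \<le> map g js \<Longrightarrow> map (\<lambda>j. f j + h j) js \<le> map (\<lambda>j. g j + h j) js"
  by (induction js) (auto simp: Cons_le_Cons)

lemma vec_inj: "a \<in> monoms n \<Longrightarrow> b \<in> monoms n \<Longrightarrow> vec n a = vec n b \<Longrightarrow> a = b"
proof (rule poly_mapping_eqI)
  fix k assume a: "a \<in> monoms n" and b: "b \<in> monoms n" and v: "vec n a = vec n b"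
  show "Poly_Mapping.lookup a k = Poly_Mapping.lookup b k"
  proof (cases "k < n")
    case True
    have "vec n a ! k = vec n b ! k" using v by simp
    thus ?thesis using True unfolding vec_def by simp
  next
    case False thus ?thesis using monoms_lookup a b by simp
  qed
qed

lemma wt_add: "wt n i (a + b) = wt n i a + wt n i b"
  unfolding wt_def lookup_add by (simp add: sum.distrib algebra_simps)

lemma wt_0: "wt n i 0 = 0" unfolding wt_def by simp

lemma wt_pos: assumes "a \<in> monoms n" "a \<noteq> 0" shows "wt n i a > 0"
proof (rule ccontr)
  assume "\<not> ?thesis"
  hence "wt n i a = 0" by simp
  hence "\<forall>j\<in>{..<n}. (if j = i then 1 else 2) * Poly_Mapping.lookup a j = 0"
    unfolding wt_def by (subst (asm) sum_eq_0_iff) auto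
  hence "\<And>j. j < n \<Longrightarrow> Poly_Mapping.lookup a j = 0" by (metis lessThan_iff mult_is_0 zero_neq_numeral one_neq_zero)
  hence "a = 0" using monoms_lookup[OF assms(1)] by (intro poly_mapping_eqI) (metis lookup_zero not_le)
  thus False using assms by simp
qed

lemma wt_ee: "k < n \<Longrightarrow> wt n i (ee k) = (if k = i then 1 else 2)"
proof -
  assume k: "k < n"
  have "wt n i (ee k) = (\<Sum>j<n. if j = k then (if j = i then 1 else 2) else 0)"
    unfolding wt_def lookup_ee by (rule sum.cong) auto
  also have "\<dots> = (if k = i then 1 else 2)" using k by (simp add: sum.delta)
  finally show ?thesis .
qed

lemma vec_add: "vec n (a + c) = map (\<lambda>j. Poly_Mapping.lookup a j + Poly_Mapping.lookup c j) [0..<n]"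
  unfolding vec_def lookup_add by simp

lemma lexo_mo: "monomial_order n (lexo n i)"
  unfolding monomial_order_def
proof (intro conjI ballI impI)
  fix a assume "a \<in> monoms n" thus "lexo n i a a" unfolding lexo_def by simp
next
  fix a b assume "a \<in> monoms n" "b \<in> monoms n" "lexo n i a b \<and> lexo n i b a"
  thus "a = b" unfolding lexo_def using vec_inj[of a n b] antisym[of "vec n a" "vec n b"] by auto
next
  fix a b c assume "a \<in> monoms n" "b \<in> monoms n" "c \<in> monoms n" "lexo n i a b \<and> lexo n i b c"
  thus "lexo n i a c" unfolding lexo_def using order_trans by auto
next
  fix a b assume "a \<in> monoms n" "b \<in> monoms n"
  thus "lexo n i a b \<or> lexo n i b a" unfolding lexo_def using linorder_linear by auto
next
  fix a assume a: "a \<in> monoms n"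
  show "lexo n i 0 a"
  proof (cases "a = 0")
    case True thus ?thesis unfolding lexo_def by simp
  next
    case False thus ?thesis using wt_pos[OF a False] unfolding lexo_def wt_0 by simp
  qed
next
  fix a b c assume "a \<in> monoms n" "b \<in> monoms n" "c \<in> monoms n" and ab: "lexo n i a b"
  thus "lexo n i (a + c) (b + c)" unfolding lexo_def wt_add vec_add using list_add_mono[of _ "[0..<n]"]
    unfolding vec_def by auto
qed

lemma lexo_min: "j < n \<Longrightarrow> i < n \<Longrightarrow> lexo n i (ee i) (ee j)"
  unfolding lexo_def using wt_ee by auto

lemma upper:
  fixes P Q :: "'a::field list"
  assumes P: "P \<in> points n" and Q: "Q \<in> points n" and PQ: "P \<noteq> Q"
  shows "reduced_GBs n (vanishing_ideal n {P, Q}) \<subseteq> GC n P Q ` {..<n}"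
proof
  fix G assume "G \<in> reduced_GBs n (vanishing_ideal n {P, Q})"
  then obtain ord where mo: "monomial_order n ord" and rg: "reduced_groebner_basis n ord (vanishing_ideal n {P, Q}) G"
    unfolding reduced_GBs_def by auto
  have lP: "length P = n" and lQ: "length Q = n" using P Q unfolding points_def by auto
  define D where "D = {j. j < n \<and> P ! j \<noteq> Q ! j}"
  have "D \<noteq> {}"
  proof
    assume "D = {}"
    hence "P = Q" using lP lQ unfolding D_def by (intro nth_equalityI) auto
    thus False using PQ by simp
  qed
  moreover have "finite D" unfolding D_def by simp
  moreover have "ee ` D \<subseteq> monoms n" unfolding D_def using ee_monoms by auto
  ultimately obtain m where m: "m \<in> ee ` D" "\<forall>m'\<in>ee ` D. ord m m'"
    using exists_min[OF mo, of "ee ` D"] by auto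
  then obtain i where i: "i \<in> D" "m = ee i" by auto
  interpret twopt_ord n P Q i ord
    by unfold_locales (use lP lQ i m mo in \<open>auto simp: D_def\<close>)
  have "G = GC n P Q i" by (rule reduced_unique[OF rg])
  thus "G \<in> GC n P Q ` {..<n}" using i unfolding D_def by auto
qed

lemma upper_card:
  fixes P Q :: "'a::field list"
  assumes P: "P \<in> points n" and Q: "Q \<in> points n" and PQ: "P \<noteq> Q"
  shows "finite (reduced_GBs n (vanishing_ideal n {P, Q}))" "card (reduced_GBs n (vanishing_ideal n {P, Q})) \<le> n"
proof -
  have "finite (GC n P Q ` {..<n})" by simp
  thus "finite (reduced_GBs n (vanishing_ideal n {P, Q}))" using upper[OF assms] finite_subset by blast
  have "card (reduced_GBs n (vanishing_ideal n {P, Q})) \<le> card (GC n P Q ` {..<n})"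
    using upper[OF assms] by (intro card_mono) auto
  also have "\<dots> \<le> n" using card_image_le[of "{..<n}" "GC n P Q"] by simp
  finally show "card (reduced_GBs n (vanishing_ideal n {P, Q})) \<le> n" .
qed

lemma lower:
  fixes n :: nat
  defines "P0 \<equiv> replicate n (0::'a::field)" and "Q1 \<equiv> replicate n (1::'a)"
  assumes "n \<ge> 1"
  shows "card (reduced_GBs n (vanishing_ideal n {P0, Q1})) = n"
proof -
  have pts: "P0 \<in> points n" "Q1 \<in> points n" "P0 \<noteq> Q1"
    using assms(3) unfolding P0_def Q1_def points_def by (auto simp: replicate_eq_replicate)
  have sub: "GC n P0 Q1 ` {..<n} \<subseteq> reduced_GBs n (vanishing_ideal n {P0, Q1})"
  proof
    fix G assume "G \<in> GC n P0 Q1 ` {..<n}"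
    then obtain i where i: "i < n" "G = GC n P0 Q1 i" by auto
    interpret twopt_ord n P0 Q1 i "lexo n i"
      by unfold_locales (use i lexo_mo lexo_min in \<open>auto simp: P0_def Q1_def\<close>)
    show "G \<in> reduced_GBs n (vanishing_ideal n {P0, Q1})"
      unfolding reduced_GBs_def using GC_reduced lexo_mo i by auto
  qed
  have inj: "inj_on (GC n P0 Q1) {..<n}"
  proof
    fix i k assume i: "i \<in> {..<n}" and k: "k \<in> {..<n}" and eq: "GC n P0 Q1 i = GC n P0 Q1 k"
    have "hcan n P0 Q1 i (ee i + ee i) \<in> GC n P0 Q1 k"
      using eq ee2_in_Mins[of i n] i unfolding GC_def by auto
    then obtain m where m: "m \<in> Mins n k" "hcan n P0 Q1 i (ee i + ee i) = hcan n P0 Q1 k m"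
      unfolding GC_def by auto
    have mk: "m \<noteq> 0" "m \<noteq> ee k" using m(1) unfolding Mins_def Uset_def by auto
    have "Poly_Mapping.lookup (hcan n P0 Q1 i (ee i + ee i)) (ee i + ee i) = 1"
      using ee2_neq by (simp add: lookup_hcan)
    hence "ee i + ee i \<in> Poly_Mapping.keys (hcan n P0 Q1 k m)" using m(2) by (simp add: in_keys_iff)
    hence "m = ee i + ee i" using keys_hcan(1)[OF mk] ee2_neq by blast
    hence "ee i + ee i \<in> ee ` {..<n} \<union> {ee k + ee k}" using Mins_sub[of k n] k m(1) by auto
    hence "ee i + ee i = ee k + ee k" using ee2_neq(3) by auto
    hence "Poly_Mapping.lookup (ee i + ee i) i = Poly_Mapping.lookup (ee k + ee k) i" by simp
    thus "i = k" unfolding lookup_ee2 by (auto split: if_splits)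
  qed
  have "n = card (GC n P0 Q1 ` {..<n})" using card_image[OF inj] by simp
  also have "\<dots> \<le> card (reduced_GBs n (vanishing_ideal n {P0, Q1}))"
    using sub upper_card(1)[OF pts] by (rule card_mono[rotated])
  finally show ?thesis using upper_card(2)[OF pts] by simp
qed

theorem mainTheorem2:
  fixes n :: nat
  assumes "n \<ge> 1"
  shows "Max {card (reduced_GBs n (vanishing_ideal n {P, Q}) :: ('p::prime_card mod_ring) mpoly set set)
              | P Q. P \<in> points n \<and> Q \<in> points n \<and> P \<noteq> Q} = n"
proof -
  let ?S = "{card (reduced_GBs n (vanishing_ideal n {P, Q}) :: ('p::prime_card mod_ring) mpoly set set)
              | P Q. P \<in> points n \<and> Q \<in> points n \<and> P \<noteq> Q}"
  have le: "\<forall>x\<in>?S. x \<le> n" using upper_card(2) by blast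
  hence fin: "finite ?S" by (meson finite_atMost finite_subset subsetI atMost_iff)
  have "n \<in> ?S"
  proof -
    have "replicate n (0::'p mod_ring) \<in> points n" "replicate n (1::'p mod_ring) \<in> points n"
      "replicate n (0::'p mod_ring) \<noteq> replicate n 1"
      using assms unfolding points_def by (auto simp: replicate_eq_replicate)
    moreover have "card (reduced_GBs n (vanishing_ideal n {replicate n (0::'p mod_ring), replicate n 1})) = n"
      using lower[OF assms, where 'a = "'p mod_ring"] by simp
    ultimately show ?thesis
      by (intro CollectI exI[of _ "replicate n (0::'p mod_ring)"] exI[of _ "replicate n (1::'p mod_ring)"]) simp
  qed
  show ?thesis by (rule Max_eqI[OF fin]) (use le \<open>n \<in> ?S\<close> in auto)
qed

end
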